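(* Let Assumptions (G) and (W) hold and let $\tilde{\boldsymbol A}$ be nonnegative definite. Then $\alpha^N=(\alpha^{1,N},\dots,\alpha^{N,N})\in\mathcal A^N$ is a Nash equilibrium of the $N$-player game on the weighted graph $w^N$ (objectives $J_0^{i,N}$) if and only if the step function strategy profile $\alpha^N_{\mathrm{step}}$ is a graphon game Nash equilibrium of the graphon game with underlying step graphon $W^N$ (corresponding to $w^N$) and with noise family $b^N_{\mathrm{step}}$ (corresponding to $(b^{1,N},\dots,b^{N,N})$) in place of $b$.
   Context: Finite-player setting. $T>0$; $\langle\cdot,\cdot\rangle_{L^2}$ inner product on $L^2([0,T])$; kernels $G$ induce $(\boldsymbol Gf)(t)=\int_0^TG(t,s)f(s)ds$, adjoints via $G(s,t)$; $\mathcal G$: real Volterra kernels ($G(t,s)=0$ for $s\ge t$) in $L^2([0,T]^2)$; nonnegative definite: $\langle f,\boldsymbol Gf\rangle\ge0$. $\mathcal A$: $\mathbb F$-progressively measurable processes with $\int_0^T\mathbb E[\alpha_t^2]dt<\infty$. Assumption (G): $\tilde A,\tilde B,\tilde C\in\mathcal G$; $\lambda>0$; $b^{i,N},b^{*,N}$ progressively measurable in $L^2(\Omega\times[0,T])$; $c^{i,N}$ integrable $\mathcal F_T$-measurable; $w^N\in[0,1]^{N\times N}$ symmetric with zero diagonal. With $\bar\alpha^{i,N}=\frac1N\sum_jw^N_{ij}\alpha^{j,N}$: $J_0^{i,N}=\mathbb E[-\langle\alpha^{i,N},(\tilde{\boldsymbol A}+\lambda\boldsymbol I)\alpha^{i,N}\rangle_{L^2}-\langle\alpha^{i,N},(\tilde{\boldsymbol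 B}+\tilde{\boldsymbol B}^* )\bar\alpha^{i,N}\rangle_{L^2}-\langle\bar\alpha^{i,N},\tilde{\boldsymbol C}\bar\alpha^{i,N}\rangle_{L^2}+\langle b^{i,N},\alpha^{i,N}\rangle_{L^2}+\langle b^{*,N},\bar\alpha^{i,N}\rangle_{L^2}+c^{i,N}]$; Nash equilibrium: no player gains by unilateral deviation in $\mathcal A$. Graphon setting: rich Fubini extension $([0,1]\times\Omega,\mathcal I\boxtimes\mathcal F,\mu\boxtimes\mathbb P)$ over $([0,1],\mathcal I,\mu)$ extending Lebesgue measure; graphon $W$: symmetric Borel $[0,1]^2\to[0,1]$ with $(\boldsymbol Wf)(u)=\int W(u,v)f(v)dv$. Assumption (W): $\tilde A,\tilde B,\tilde C\in\mathcal G$ with $\sup_t\int_0^T(|\tilde A(t,s)|^2+|\tilde B(t,s)|^2)ds+\sup_s\int_0^T(|\tilde A(t,s)|^2+|\tilde B(t,s)|^2)dt<\infty$; $(b^u,c^u)_u$ jointly $\mathcal I\boxtimes\mathcal F$-measurable, essentially pairwise independent, with measurable law map, $b^u$ progressively measurable, $b\in L^2(\Omega\times[0,T]\times[0,1])$, $c^u$ integrable; $b^*$ independent common noise in $L^2(\Omega\times[0,T])$; $\lambda>0$. $\mathbb F$: augmented filtration generated by $((b^u),(c^u),b^* )$; it is assumed to contain the filtration generated by $(b^{1,N},\dots,b^{N,N},b^{*,N},c^{1,N},\dots,c^{N,N})$. Admissible profiles $\mathcal A^\infty$: jointly measurable $\mathbb F$-progressively measurable families with $\int_0^T\mathbb E[(\alpha^u_t)^2]dt<\infty$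 a.e. and $\int_0^1\int_0^T\mathbb E[(\alpha^u_t)^2]dtdu<\infty$. $J^{u,W}(\alpha^u;(\alpha^v)_{v\ne u})=\mathbb E[-\langle\alpha^u,(\tilde{\boldsymbol A}+\lambda\boldsymbol I)\alpha^u\rangle-\langle\alpha^u,(\tilde{\boldsymbol B}+\tilde{\boldsymbol B}^* )(\boldsymbol W\alpha)(u)\rangle-\langle(\boldsymbol W\alpha)(u),\tilde{\boldsymbol C}(\boldsymbol W\alpha)(u)\rangle+\langle b^u,\alpha^u\rangle+\langle b^*,(\boldsymbol W\alpha)(u)\rangle+c^u]$ with $(\boldsymbol W\alpha)(u)_t=\int_0^1W(u,v)\alpha^v_tdv$; graphon Nash equilibrium: $\hat\alpha\in\mathcal A^\infty$ with $\hat\alpha^u$ maximizing $J^{u,W}(\cdot;(\hat\alpha^v)_{v\ne u})$ over progressively measurable $L^2$ processes for $\mu$-a.e. $u$. (In the step-graphon game, $b^*$ is taken to be $b^{*,N}$ and $c^u$ any integrable family.) Steps: $\mathcal P^N_i=[\frac{i-1}N,\frac iN)$ for $i<N$, $\mathcal P^N_N=[\frac{N-1}N,1]$. For processes $\alpha^{1,N},\dots,\alpha^{N,N}$, $\alpha^{u,N}_{\mathrm{step}}:=\alpha^{i,N}$ for $u\in\mathcal P^N_i$ (similarly $b^N_{\mathrm{step}}$). $W^N(u,v):=w^N_{ij}$ for $(u,v)\in\mathcal P^N_i\times\mathcal P^N_j$. *)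

theory Defs
  imports "HOL-Probability.Probability"
begin

definition ip :: "real \<Rightarrow> (real \<Rightarrow> real) \<Rightarrow> (real \<Rightarrow> real) \<Rightarrow> real" where
  "ip T f g = (LINT s:{0..T}|lborel. f s * g s)"

definition kop :: "real \<Rightarrow> (real \<Rightarrow> real \<Rightarrow> real) \<Rightarrow> (real \<Rightarrow> real) \<Rightarrow> real \<Rightarrow> real" where
  "kop T G f = (\<lambda>t. LINT s:{0..T}|lborel. G t s * f s)"

definition kadj :: "(real \<Rightarrow> real \<Rightarrow> real) \<Rightarrow> real \<Rightarrow> real \<Rightarrow> real" where
  "kadj G = (\<lambda>t s. G s t)"

definition L2fun :: "real \<Rightarrow> (real \<Rightarrow> real) \<Rightarrow> bool" where
  "L2fun T f \<longleftrightarrow> f \<in> borel_measurable lborel \<and> set_integrable lborel {0..T} (\<lambda>s. (f s)\<^sup>2)"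

definition volterra :: "real \<Rightarrow> (real \<Rightarrow> real \<Rightarrow> real) \<Rightarrow> bool" where
  "volterra T G \<longleftrightarrow> case_prod G \<in> borel_measurable borel
     \<and> (\<forall>t\<in>{0..T}. \<forall>s\<in>{0..T}. t \<le> s \<longrightarrow> G t s = 0)
     \<and> (\<integral>\<^sup>+ x \<in> {0..T} \<times> {0..T}. ennreal ((case_prod G x)\<^sup>2) \<partial>lborel) < \<infinity>"

definition nonneg_def_kernel :: "real \<Rightarrow> (real \<Rightarrow> real \<Rightarrow> real) \<Rightarrow> bool" where
  "nonneg_def_kernel T G \<longleftrightarrow> (\<forall>f. L2fun T f \<longrightarrow> ip T f (kop T G f) \<ge> 0)"

definition progressive ::
  "real \<Rightarrow> (real \<Rightarrow> 'w measure) \<Rightarrow> ('w \<Rightarrow> real \<Rightarrow> real) \<Rightarrow> bool" where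
  "progressive T F X \<longleftrightarrow>
     (\<forall>t\<in>{0..T}. (\<lambda>(\<omega>, s). X \<omega> s) \<in> borel_measurable (F t \<Otimes>\<^sub>M restrict_space lborel {0..t}))"

definition L2proc :: "real \<Rightarrow> 'w measure \<Rightarrow> ('w \<Rightarrow> real \<Rightarrow> real) \<Rightarrow> bool" where
  "L2proc T M X \<longleftrightarrow> (\<integral>\<^sup>+ t \<in> {0..T}. (\<integral>\<^sup>+ \<omega>. ennreal ((X \<omega> t)\<^sup>2) \<partial>M) \<partial>lborel) < \<infinity>"

definition admissible ::
  "real \<Rightarrow> 'w measure \<Rightarrow> (real \<Rightarrow> 'w measure) \<Rightarrow> ('w \<Rightarrow> real \<Rightarrow> real) \<Rightarrow> bool" where
  "admissible T M F X \<longleftrightarrow> progressive T F X \<and> L2proc T M X"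

definition abar :: "nat \<Rightarrow> (nat \<Rightarrow> nat \<Rightarrow> real) \<Rightarrow> (nat \<Rightarrow> 'w \<Rightarrow> real \<Rightarrow> real) \<Rightarrow> nat \<Rightarrow> 'w \<Rightarrow> real \<Rightarrow> real" where
  "abar N w \<alpha> i = (\<lambda>\<omega> t. (1 / real N) * (\<Sum>j\<in>{1..N}. w i j * \<alpha> j \<omega> t))"

definition payoff ::
  "real \<Rightarrow> (real \<Rightarrow> real \<Rightarrow> real) \<Rightarrow> (real \<Rightarrow> real \<Rightarrow> real) \<Rightarrow> (real \<Rightarrow> real \<Rightarrow> real) \<Rightarrow> real
   \<Rightarrow> (real \<Rightarrow> real) \<Rightarrow> (real \<Rightarrow> real) \<Rightarrow> (real \<Rightarrow> real) \<Rightarrow> (real \<Rightarrow> real) \<Rightarrow> real \<Rightarrow> real" where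
  "payoff T A B C lam a z b bs c =
     - ip T a (\<lambda>t. kop T A a t + lam * a t)
     - ip T a (\<lambda>t. kop T B z t + kop T (kadj B) z t)
     - ip T z (kop T C z)
     + ip T b a + ip T bs z + c"

definition J0 ::
  "real \<Rightarrow> 'w measure \<Rightarrow> (real \<Rightarrow> real \<Rightarrow> real) \<Rightarrow> (real \<Rightarrow> real \<Rightarrow> real) \<Rightarrow> (real \<Rightarrow> real \<Rightarrow> real) \<Rightarrow> real
   \<Rightarrow> nat \<Rightarrow> (nat \<Rightarrow> nat \<Rightarrow> real) \<Rightarrow> (nat \<Rightarrow> 'w \<Rightarrow> real \<Rightarrow> real) \<Rightarrow> ('w \<Rightarrow> real \<Rightarrow> real)
   \<Rightarrow> (nat \<Rightarrow> 'w \<Rightarrow> real) \<Rightarrow> nat \<Rightarrow> (nat \<Rightarrow> 'w \<Rightarrow> real \<Rightarrow> real) \<Rightarrow> real" where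
  "J0 T M A B C lam N w b bs c i \<alpha> =
     (\<integral>\<omega>. payoff T A B C lam (\<alpha> i \<omega>) (abar N w \<alpha> i \<omega>) (b i \<omega>) (bs \<omega>) (c i \<omega>) \<partial>M)"

definition nash_N ::
  "real \<Rightarrow> 'w measure \<Rightarrow> (real \<Rightarrow> 'w measure) \<Rightarrow> (real \<Rightarrow> real \<Rightarrow> real) \<Rightarrow> (real \<Rightarrow> real \<Rightarrow> real)
   \<Rightarrow> (real \<Rightarrow> real \<Rightarrow> real) \<Rightarrow> real \<Rightarrow> nat \<Rightarrow> (nat \<Rightarrow> nat \<Rightarrow> real) \<Rightarrow> (nat \<Rightarrow> 'w \<Rightarrow> real \<Rightarrow> real)
   \<Rightarrow> ('w \<Rightarrow> real \<Rightarrow> real) \<Rightarrow> (nat \<Rightarrow> 'w \<Rightarrow> real) \<Rightarrow> (nat \<Rightarrow> 'w \<Rightarrow> real \<Rightarrow> real) \<Rightarrow> bool" where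
  "nash_N T M F A B C lam N w b bs c \<alpha> \<longleftrightarrow>
     (\<forall>i\<in>{1..N}. admissible T M F (\<alpha> i)) \<and>
     (\<forall>i\<in>{1..N}. \<forall>\<beta>. admissible T M F \<beta> \<longrightarrow>
        J0 T M A B C lam N w b bs c i (\<alpha>(i := \<beta>)) \<le> J0 T M A B C lam N w b bs c i \<alpha>)"

definition Wagg :: "(real \<Rightarrow> real \<Rightarrow> real) \<Rightarrow> (real \<Rightarrow> 'w \<Rightarrow> real \<Rightarrow> real) \<Rightarrow> real \<Rightarrow> 'w \<Rightarrow> real \<Rightarrow> real" where
  "Wagg W \<alpha> u = (\<lambda>\<omega> t. LINT v:{0..1}|lborel. W u v * \<alpha> v \<omega> t)"

definition JW ::
  "real \<Rightarrow> 'w measure \<Rightarrow> (real \<Rightarrow> real \<Rightarrow> real) \<Rightarrow> (real \<Rightarrow> real \<Rightarrow> real) \<Rightarrow> (real \<Rightarrow> real \<Rightarrow> real) \<Rightarrow> real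
   \<Rightarrow> (real \<Rightarrow> real \<Rightarrow> real) \<Rightarrow> (real \<Rightarrow> 'w \<Rightarrow> real \<Rightarrow> real) \<Rightarrow> ('w \<Rightarrow> real \<Rightarrow> real)
   \<Rightarrow> (real \<Rightarrow> 'w \<Rightarrow> real) \<Rightarrow> real \<Rightarrow> (real \<Rightarrow> 'w \<Rightarrow> real \<Rightarrow> real) \<Rightarrow> real" where
  "JW T M A B C lam W b bs c u \<alpha> =
     (\<integral>\<omega>. payoff T A B C lam (\<alpha> u \<omega>) (Wagg W \<alpha> u \<omega>) (b u \<omega>) (bs \<omega>) (c u \<omega>) \<partial>M)"

definition admissibleG ::
  "real \<Rightarrow> 'w measure \<Rightarrow> (real \<Rightarrow> 'w measure) \<Rightarrow> (real \<Rightarrow> 'w \<Rightarrow> real \<Rightarrow> real) \<Rightarrow> bool" where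
  "admissibleG T M F \<alpha> \<longleftrightarrow>
     (\<lambda>(u, \<omega>, t). \<alpha> u \<omega> t) \<in> borel_measurable
        (restrict_space lebesgue {0..1} \<Otimes>\<^sub>M (M \<Otimes>\<^sub>M restrict_space lborel {0..T}))
     \<and> (\<forall>u\<in>{0..1}. progressive T F (\<alpha> u))
     \<and> (AE u in lborel. u \<in> {0..1} \<longrightarrow> L2proc T M (\<alpha> u))
     \<and> (\<integral>\<^sup>+ u \<in> {0..1}. (\<integral>\<^sup>+ t \<in> {0..T}. (\<integral>\<^sup>+ \<omega>. ennreal ((\<alpha> u \<omega> t)\<^sup>2) \<partial>M) \<partial>lborel) \<partial>lborel) < \<infinity>"

definition nash_graphon ::
  "real \<Rightarrow> 'w measure \<Rightarrow> (real \<Rightarrow> 'w measure) \<Rightarrow> (real \<Rightarrow> real \<Rightarrow> real) \<Rightarrow> (real \<Rightarrow> real \<Rightarrow> real)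
   \<Rightarrow> (real \<Rightarrow> real \<Rightarrow> real) \<Rightarrow> real \<Rightarrow> (real \<Rightarrow> real \<Rightarrow> real) \<Rightarrow> (real \<Rightarrow> 'w \<Rightarrow> real \<Rightarrow> real)
   \<Rightarrow> ('w \<Rightarrow> real \<Rightarrow> real) \<Rightarrow> (real \<Rightarrow> 'w \<Rightarrow> real) \<Rightarrow> (real \<Rightarrow> 'w \<Rightarrow> real \<Rightarrow> real) \<Rightarrow> bool" where
  "nash_graphon T M F A B C lam W b bs c \<alpha> \<longleftrightarrow>
     admissibleG T M F \<alpha> \<and>
     (AE u in lborel. u \<in> {0..1} \<longrightarrow>
        (\<forall>\<beta>. admissible T M F \<beta> \<longrightarrow>
           JW T M A B C lam W b bs c u (\<alpha>(u := \<beta>)) \<le> JW T M A B C lam W b bs c u \<alpha>))"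

definition stepP :: "nat \<Rightarrow> nat \<Rightarrow> real set" where
  "stepP N i = (if i < N then {(real i - 1) / real N ..< real i / real N}
                else {(real N - 1) / real N .. 1})"

text \<open>Index i in {1..N} of the step containing u (meaningful for u in [0,1]).\<close>
definition stepidx :: "nat \<Rightarrow> real \<Rightarrow> nat" where
  "stepidx N u = (THE i. i \<in> {1..N} \<and> u \<in> stepP N i)"

definition step :: "nat \<Rightarrow> (nat \<Rightarrow> 'a) \<Rightarrow> real \<Rightarrow> 'a" where
  "step N x u = x (stepidx N u)"

definition step_graphon :: "nat \<Rightarrow> (nat \<Rightarrow> nat \<Rightarrow> real) \<Rightarrow> real \<Rightarrow> real \<Rightarrow> real" where
  "step_graphon N w u v = w (stepidx N u) (stepidx N v)"

end

theory Submission
  imports Defs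
begin


definition RT :: "real \<Rightarrow> real measure" where "RT T = restrict_space lborel {0..T}"

lemma space_RT[simp]: "space (RT T) = {0..T}" by (simp add: RT_def)
lemma sets_RT_sub: "A \<in> sets (RT T) \<Longrightarrow> A \<in> sets borel"
  unfolding RT_def by (simp add: sets_restrict_space_iff)

lemma finite_RT: "finite_measure (RT T)"
  unfolding RT_def
  by (intro finite_measureI) (cases "0 \<le> T"; simp add: emeasure_restrict_space)

lemma sf_RT: "sigma_finite_measure (RT T)"
  using finite_RT finite_measure.axioms(1) by blast

lemma emeasure_RT: "T \<ge> 0 \<Longrightarrow> emeasure (RT T) (space (RT T)) = ennreal T"
  unfolding RT_def by (simp add: emeasure_restrict_space)

lemma integral_RT: "(LINT s:{0..T}|lborel. (f::real\<Rightarrow>real) s) = integral\<^sup>L (RT T) f"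
  unfolding RT_def set_lebesgue_integral_def
  using integral_restrict_space[of "{0..T}" lborel f] by simp

lemma nn_integral_RT: "(\<integral>\<^sup>+ s\<in>{0..T}. f s \<partial>lborel) = integral\<^sup>N (RT T) f"
  unfolding RT_def by (simp add: nn_integral_restrict_space)

lemma ip_RT: "ip T f g = (\<integral>s. f s * g s \<partial>RT T)"
  unfolding ip_def integral_RT ..

lemma kop_RT: "kop T G f t = (\<integral>s. G t s * f s \<partial>RT T)"
  unfolding kop_def integral_RT ..

lemma meas_RT[measurable]: "(\<lambda>x. x) \<in> borel_measurable (RT T)"
  unfolding RT_def by (simp add: measurable_restrict_space1)

definition E2 :: "real \<Rightarrow> 'w measure \<Rightarrow> ('w \<Rightarrow> real \<Rightarrow> real) \<Rightarrow> ennreal" where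
  "E2 T M X = (\<integral>\<^sup>+ p. ennreal ((X (fst p) (snd p))\<^sup>2) \<partial>(M \<Otimes>\<^sub>M RT T))"

definition good :: "real \<Rightarrow> 'w measure \<Rightarrow> ('w \<Rightarrow> real \<Rightarrow> real) \<Rightarrow> bool" where
  "good T M X \<longleftrightarrow> (\<lambda>p. X (fst p) (snd p)) \<in> borel_measurable (M \<Otimes>\<^sub>M RT T) \<and> E2 T M X < \<infinity>"

lemma enn_aux: "a \<le> 2*x + 2*y \<Longrightarrow> 0 \<le> x \<Longrightarrow> 0 \<le> y \<Longrightarrow> ennreal a \<le> 2 * ennreal x + 2 * ennreal y"
proof -
  assume h: "a \<le> 2*x + 2*y" "0 \<le> x" "0 \<le> y"
  have "ennreal a \<le> ennreal (2*x + 2*y)" using h by (intro ennreal_leI)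
  also have "\<dots> = ennreal (2*x) + ennreal (2*y)" using h by (intro ennreal_plus) auto
  also have "\<dots> = 2 * ennreal x + 2 * ennreal y" using h by (simp add: ennreal_mult)
  finally show ?thesis .
qed

lemma good_add:
  assumes "good T M X" "good T M Y"
  shows "good T M (\<lambda>\<omega> t. X \<omega> t + Y \<omega> t)"
proof -
  have mX[measurable]: "(\<lambda>p. X (fst p) (snd p)) \<in> borel_measurable (M \<Otimes>\<^sub>M RT T)"
   and mY[measurable]: "(\<lambda>p. Y (fst p) (snd p)) \<in> borel_measurable (M \<Otimes>\<^sub>M RT T)"
    using assms by (auto simp: good_def)
  have "E2 T M (\<lambda>\<omega> t. X \<omega> t + Y \<omega> t) \<le>
     (\<integral>\<^sup>+ p. 2 * ennreal ((X (fst p) (snd p))\<^sup>2) + 2 * ennreal ((Y (fst p) (snd p))\<^sup>2) \<partial>(M \<Otimes>\<^sub>M RT T))"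
    unfolding E2_def
  proof (intro nn_integral_mono)
    fix p
    have "(X (fst p) (snd p) + Y (fst p) (snd p))\<^sup>2 \<le> 2 * (X (fst p) (snd p))\<^sup>2 + 2 * (Y (fst p) (snd p))\<^sup>2"
      by (smt (verit) zero_le_power2 power2_sum power2_diff)
    then show "ennreal ((X (fst p) (snd p) + Y (fst p) (snd p))\<^sup>2)
        \<le> 2 * ennreal ((X (fst p) (snd p))\<^sup>2) + 2 * ennreal ((Y (fst p) (snd p))\<^sup>2)"
      by (rule enn_aux) auto
  qed
  also have "\<dots> = 2 * E2 T M X + 2 * E2 T M Y"
    unfolding E2_def by (simp add: nn_integral_add nn_integral_cmult)
  also have "\<dots> < \<infinity>" using assms by (simp add: good_def ennreal_mult_less_top)
  finally show ?thesis using mX mY unfolding good_def by simp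
qed

lemma good_scale:
  assumes "good T M X"
  shows "good T M (\<lambda>\<omega> t. c * X \<omega> t)"
proof -
  have mX[measurable]: "(\<lambda>p. X (fst p) (snd p)) \<in> borel_measurable (M \<Otimes>\<^sub>M RT T)"
    using assms by (auto simp: good_def)
  have "E2 T M (\<lambda>\<omega> t. c * X \<omega> t) = ennreal (c\<^sup>2) * E2 T M X"
    unfolding E2_def
    by (subst nn_integral_cmult[symmetric]) (auto simp: power_mult_distrib ennreal_mult)
  also have "\<dots> < \<infinity>" using assms by (simp add: good_def ennreal_mult_less_top)
  finally show ?thesis using mX unfolding good_def by simp
qed

lemma good_zero: "good T M (\<lambda>\<omega> t. 0)"
  unfolding good_def E2_def by simp

lemma good_sum:
  assumes "finite I" "\<And>j. j \<in> I \<Longrightarrow> good T M (X j)"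
  shows "good T M (\<lambda>\<omega> t. \<Sum>j\<in>I. X j \<omega> t)"
  using assms
proof (induction I rule: finite_induct)
  case empty then show ?case by (simp add: good_zero)
next
  case (insert x F)
  then show ?case using good_add[of T M "X x" "\<lambda>\<omega> t. \<Sum>j\<in>F. X j \<omega> t"] by simp
qed

lemma E2_iter:
  assumes sfM: "sigma_finite_measure M"
    and m: "(\<lambda>p. X (fst p) (snd p)) \<in> borel_measurable (M \<Otimes>\<^sub>M RT T)"
  shows "E2 T M X = (\<integral>\<^sup>+ \<omega>. (\<integral>\<^sup>+ t. ennreal ((X \<omega> t)\<^sup>2) \<partial>RT T) \<partial>M)"
proof -
  have [measurable]: "(\<lambda>p. X (fst p) (snd p)) \<in> borel_measurable (M \<Otimes>\<^sub>M RT T)" by (fact m)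
  show ?thesis unfolding E2_def
    by (subst sigma_finite_measure.nn_integral_fst[OF sf_RT, symmetric]) auto
qed

lemma E2_L2proc:
  assumes sfM: "sigma_finite_measure M"
    and m: "(\<lambda>p. X (fst p) (snd p)) \<in> borel_measurable (M \<Otimes>\<^sub>M RT T)"
  shows "L2proc T M X \<longleftrightarrow> E2 T M X < \<infinity>"
proof -
  interpret P: pair_sigma_finite M "RT T"
    by (intro pair_sigma_finite.intro sfM sf_RT)
  have [measurable]: "(\<lambda>p. X (fst p) (snd p)) \<in> borel_measurable (M \<Otimes>\<^sub>M RT T)" by (fact m)
  have "(\<integral>\<^sup>+ t\<in>{0..T}. (\<integral>\<^sup>+ \<omega>. ennreal ((X \<omega> t)\<^sup>2) \<partial>M) \<partial>lborel)
      = (\<integral>\<^sup>+ t. (\<integral>\<^sup>+ \<omega>. ennreal ((X \<omega> t)\<^sup>2) \<partial>M) \<partial>RT T)"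
    by (rule nn_integral_RT)
  also have "\<dots> = (\<integral>\<^sup>+ \<omega>. (\<integral>\<^sup>+ t. ennreal ((X \<omega> t)\<^sup>2) \<partial>RT T) \<partial>M)"
    by (rule P.Fubini') measurable
  also have "\<dots> = E2 T M X" using E2_iter[OF sfM m] by simp
  finally show ?thesis unfolding L2proc_def by simp
qed

lemma ident_meas:
  assumes "sets N \<subseteq> sets M" "space N = space M"
  shows "(\<lambda>x. x) \<in> measurable M N"
  unfolding measurable_def using assms sets.sets_into_space[of _ N]
  by (auto simp: Int_absorb2)

lemma adm_good:
  assumes sub: "sets (F T) \<subseteq> sets M" "space (F T) = space M" and sfM: "sigma_finite_measure M"
    and pr: "progressive T F X" and l2: "L2proc T M X" and T0: "T \<ge> 0"
  shows "good T M X"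
proof -
  have m1: "(\<lambda>(\<omega>, s). X \<omega> s) \<in> borel_measurable (F T \<Otimes>\<^sub>M RT T)"
    using pr T0 unfolding progressive_def RT_def by auto
  have id: "(\<lambda>p. (fst p, snd p)) \<in> measurable (M \<Otimes>\<^sub>M RT T) (F T \<Otimes>\<^sub>M RT T)"
    by (intro measurable_Pair measurable_compose[OF measurable_fst ident_meas[OF sub]] measurable_snd)
  have m: "(\<lambda>p. X (fst p) (snd p)) \<in> borel_measurable (M \<Otimes>\<^sub>M RT T)"
    using measurable_compose[OF id m1] by (simp add: case_prod_beta)
  show ?thesis using E2_L2proc[OF sfM m] l2 m unfolding good_def by simp
qed

lemma norm_int_le:
  fixes f :: "'a \<Rightarrow> real"
  shows "ennreal (norm (integral\<^sup>L N f)) \<le> (\<integral>\<^sup>+ x. ennreal (norm (f x)) \<partial>N)"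
  using integral_norm_bound_ennreal[of N f]
  by (cases "integrable N f") (auto simp: not_integrable_integral_eq)

lemma abs_mult_le_sq: "\<bar>(a::real) * b\<bar> \<le> a\<^sup>2 + b\<^sup>2"
proof -
  have "0 \<le> (\<bar>a\<bar> - \<bar>b\<bar>)\<^sup>2" by simp
  hence "2*\<bar>a\<bar>*\<bar>b\<bar> \<le> \<bar>a\<bar>\<^sup>2 + \<bar>b\<bar>\<^sup>2" by (simp add: power2_diff)
  moreover have "\<bar>a * b\<bar> \<le> 2*\<bar>a\<bar>*\<bar>b\<bar>" by (simp add: abs_mult)
  ultimately show ?thesis by simp
qed

lemma ip_integrable:
  assumes sfM: "sigma_finite_measure M" and gX: "good T M X" and gY: "good T M Y"
  shows "integrable M (\<lambda>\<omega>. ip T (X \<omega>) (Y \<omega>))"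
proof -
  have mX[measurable]: "(\<lambda>p. X (fst p) (snd p)) \<in> borel_measurable (M \<Otimes>\<^sub>M RT T)"
   and mY[measurable]: "(\<lambda>p. Y (fst p) (snd p)) \<in> borel_measurable (M \<Otimes>\<^sub>M RT T)"
    using gX gY by (auto simp: good_def)
  have mP: "case_prod (\<lambda>\<omega> s. X \<omega> s * Y \<omega> s) \<in> borel_measurable (M \<Otimes>\<^sub>M RT T)"
    by (simp add: case_prod_beta')
  have meas: "(\<lambda>\<omega>. ip T (X \<omega>) (Y \<omega>)) \<in> borel_measurable M"
    unfolding ip_RT by (rule sigma_finite_measure.borel_measurable_lebesgue_integral[OF sf_RT mP])
  have "(\<integral>\<^sup>+ \<omega>. ennreal (norm (ip T (X \<omega>) (Y \<omega>))) \<partial>M)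
      \<le> (\<integral>\<^sup>+ \<omega>. (\<integral>\<^sup>+ s. ennreal ((X \<omega> s)\<^sup>2) + ennreal ((Y \<omega> s)\<^sup>2) \<partial>RT T) \<partial>M)"
  proof (intro nn_integral_mono)
    fix \<omega>
    have "ennreal (norm (ip T (X \<omega>) (Y \<omega>))) \<le> (\<integral>\<^sup>+ s. ennreal (norm (X \<omega> s * Y \<omega> s)) \<partial>RT T)"
      unfolding ip_RT by (rule norm_int_le)
    also have "\<dots> \<le> (\<integral>\<^sup>+ s. ennreal ((X \<omega> s)\<^sup>2) + ennreal ((Y \<omega> s)\<^sup>2) \<partial>RT T)"
    proof (intro nn_integral_mono)
      fix s
      have "norm (X \<omega> s * Y \<omega> s) \<le> (X \<omega> s)\<^sup>2 + (Y \<omega> s)\<^sup>2"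
        using abs_mult_le_sq by simp
      then show "ennreal (norm (X \<omega> s * Y \<omega> s)) \<le> ennreal ((X \<omega> s)\<^sup>2) + ennreal ((Y \<omega> s)\<^sup>2)"
        by (simp add: ennreal_plus[symmetric] ennreal_leI del: ennreal_plus)
    qed
    finally show "ennreal (norm (ip T (X \<omega>) (Y \<omega>))) \<le> (\<integral>\<^sup>+ s. ennreal ((X \<omega> s)\<^sup>2) + ennreal ((Y \<omega> s)\<^sup>2) \<partial>RT T)" .
  qed
  also have "\<dots> = (\<integral>\<^sup>+ p. ennreal ((X (fst p) (snd p))\<^sup>2) + ennreal ((Y (fst p) (snd p))\<^sup>2) \<partial>(M \<Otimes>\<^sub>M RT T))"
    by (subst sigma_finite_measure.nn_integral_fst[OF sf_RT, symmetric]) auto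
  also have "\<dots> = E2 T M X + E2 T M Y"
    unfolding E2_def by (rule nn_integral_add) auto
  also have "\<dots> < \<infinity>" using gX gY by (simp add: good_def)
  finally show ?thesis by (intro integrableI_bounded meas)
qed

lemma kernel_meas:
  fixes G :: "real \<Rightarrow> real \<Rightarrow> real"
  assumes mG: "case_prod G \<in> borel_measurable borel" and f: "f \<in> measurable N borel" and g: "g \<in> measurable N borel"
  shows "(\<lambda>x. G (f x) (g x)) \<in> borel_measurable N"
proof -
  have "(\<lambda>x. (f x, g x)) \<in> measurable N (borel \<Otimes>\<^sub>M borel)"
    using f g by (rule measurable_Pair)
  hence "(\<lambda>x. (f x, g x)) \<in> measurable N borel" by (simp only: borel_prod)
  from measurable_compose[OF this mG] show ?thesis by simp
qed

lemma nnint_meas: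
  assumes [measurable]: "(\<lambda>p. X (fst p) (snd p)) \<in> borel_measurable (M \<Otimes>\<^sub>M RT T)"
  shows "(\<lambda>\<omega>. \<integral>\<^sup>+ s. ennreal ((X \<omega> s)\<^sup>2) \<partial>RT T) \<in> borel_measurable M"
  by (rule sigma_finite_measure.borel_measurable_nn_integral[OF sf_RT]) (simp add: case_prod_beta')

lemma kop_good:
  assumes sfM: "sigma_finite_measure M" and mG: "case_prod G \<in> borel_measurable borel"
    and bnd: "\<forall>t\<in>{0..T}. (\<integral>\<^sup>+ s. ennreal ((G t s)\<^sup>2) \<partial>RT T) \<le> ennreal K"
    and gX: "good T M X" and T0: "T \<ge> 0"
  shows "good T M (\<lambda>\<omega> t. kop T G (X \<omega>) t)"
proof -
  have mX[measurable]: "(\<lambda>p. X (fst p) (snd p)) \<in> borel_measurable (M \<Otimes>\<^sub>M RT T)"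
    using gX by (auto simp: good_def)
  have mGq: "(\<lambda>q. G (snd (fst q)) (snd q)) \<in> borel_measurable ((M \<Otimes>\<^sub>M RT T) \<Otimes>\<^sub>M RT T)"
    by (rule kernel_meas[OF mG]) measurable
  have mXq: "(\<lambda>q. X (fst (fst q)) (snd q)) \<in> borel_measurable ((M \<Otimes>\<^sub>M RT T) \<Otimes>\<^sub>M RT T)"
  proof -
    have "(\<lambda>q. (fst (fst q), snd q)) \<in> measurable ((M \<Otimes>\<^sub>M RT T) \<Otimes>\<^sub>M RT T) (M \<Otimes>\<^sub>M RT T)"
      by measurable
    from measurable_compose[OF this mX] show ?thesis by simp
  qed
  have mP: "case_prod (\<lambda>p s. G (snd p) s * X (fst p) s) \<in> borel_measurable ((M \<Otimes>\<^sub>M RT T) \<Otimes>\<^sub>M RT T)"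
    using borel_measurable_times[OF mGq mXq] by (simp add: case_prod_beta')
  have meas[measurable]: "(\<lambda>p. kop T G (X (fst p)) (snd p)) \<in> borel_measurable (M \<Otimes>\<^sub>M RT T)"
    unfolding kop_RT by (rule sigma_finite_measure.borel_measurable_lebesgue_integral[OF sf_RT mP])
  have pt: "ennreal ((kop T G (X \<omega>) t)\<^sup>2) \<le> ennreal K * (\<integral>\<^sup>+ s. ennreal ((X \<omega> s)\<^sup>2) \<partial>RT T)"
    if \<omega>: "\<omega> \<in> space M" and t: "t \<in> {0..T}" for \<omega> t
  proof -
    have mg: "(\<lambda>s. ennreal \<bar>G t s\<bar>) \<in> borel_measurable (RT T)"
      using kernel_meas[OF mG, of "\<lambda>s. t" "RT T" "\<lambda>s. s"] by simp
    have mx: "(\<lambda>s. ennreal \<bar>X \<omega> s\<bar>) \<in> borel_measurable (RT T)"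
      using measurable_Pair2[OF mX \<omega>] by simp
    have "ennreal ((kop T G (X \<omega>) t)\<^sup>2) = (ennreal (norm (kop T G (X \<omega>) t)))\<^sup>2"
      by (simp add: ennreal_power)
    also have "\<dots> \<le> (\<integral>\<^sup>+ s. ennreal (norm (G t s * X \<omega> s)) \<partial>RT T)\<^sup>2"
      unfolding kop_RT by (intro power_mono norm_int_le) auto
    also have "\<dots> = (\<integral>\<^sup>+ s. ennreal \<bar>G t s\<bar> * ennreal \<bar>X \<omega> s\<bar> \<partial>RT T)\<^sup>2"
      by (simp add: abs_mult ennreal_mult)
    also have "\<dots> \<le> (\<integral>\<^sup>+ s. (ennreal \<bar>G t s\<bar>)^2 \<partial>RT T) * (\<integral>\<^sup>+ s. (ennreal \<bar>X \<omega> s\<bar>)^2 \<partial>RT T)"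
      by (rule Cauchy_Schwarz_nn_integral[OF mg mx])
    also have "\<dots> = (\<integral>\<^sup>+ s. ennreal ((G t s)\<^sup>2) \<partial>RT T) * (\<integral>\<^sup>+ s. ennreal ((X \<omega> s)\<^sup>2) \<partial>RT T)"
      by (simp add: ennreal_power)
    also have "\<dots> \<le> ennreal K * (\<integral>\<^sup>+ s. ennreal ((X \<omega> s)\<^sup>2) \<partial>RT T)"
      using bnd t by (intro mult_right_mono) auto
    finally show ?thesis .
  qed
  have "E2 T M (\<lambda>\<omega> t. kop T G (X \<omega>) t)
      = (\<integral>\<^sup>+ \<omega>. (\<integral>\<^sup>+ t. ennreal ((kop T G (X \<omega>) t)\<^sup>2) \<partial>RT T) \<partial>M)"
    by (rule E2_iter[OF sfM]) simp
  also have "\<dots> \<le> (\<integral>\<^sup>+ \<omega>. (\<integral>\<^sup>+ t. ennreal K * (\<integral>\<^sup>+ s. ennreal ((X \<omega> s)\<^sup>2) \<partial>RT T) \<partial>RT T) \<partial>M)"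
    using pt by (intro nn_integral_mono) auto
  also have "\<dots> = (\<integral>\<^sup>+ \<omega>. (ennreal K * ennreal T) * (\<integral>\<^sup>+ s. ennreal ((X \<omega> s)\<^sup>2) \<partial>RT T) \<partial>M)"
    using emeasure_RT[OF T0] by (simp add: mult.assoc mult.commute[of _ "ennreal T"])
  also have "\<dots> = (ennreal K * ennreal T) * E2 T M X"
    by (subst nn_integral_cmult) (auto simp: E2_iter[OF sfM mX] nnint_meas[OF mX])
  also have "\<dots> < \<infinity>" using gX by (simp add: good_def ennreal_mult_less_top)
  finally show ?thesis using meas unfolding good_def by simp
qed

definition QQ where
  "QQ T A B lam a z b = (\<lambda>\<omega>. - ip T (a \<omega>) (\<lambda>t. kop T A (a \<omega>) t + lam * a \<omega> t)
       - ip T (a \<omega>) (\<lambda>t. kop T B (z \<omega>) t + kop T (kadj B) (z \<omega>) t) + ip T (b \<omega>) (a \<omega>))"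

definition RR where
  "RR T C z bs = (\<lambda>\<omega>. - ip T (z \<omega>) (kop T C (z \<omega>)) + ip T (bs \<omega>) (z \<omega>))"

lemma payoff_split:
  "payoff T A B C lam (a \<omega>) (z \<omega>) (b \<omega>) (bs \<omega>) c = QQ T A B lam a z b \<omega> + RR T C z bs \<omega> + c"
  by (simp add: payoff_def QQ_def RR_def)

lemma QQ_integrable:
  fixes A B :: "real \<Rightarrow> real \<Rightarrow> real"
  assumes sfM: "sigma_finite_measure M" and T0: "T \<ge> 0"
    and mA: "case_prod A \<in> borel_measurable borel" and mB: "case_prod B \<in> borel_measurable borel"
    and bA: "\<forall>t\<in>{0..T}. (\<integral>\<^sup>+ s. ennreal ((A t s)\<^sup>2) \<partial>RT T) \<le> ennreal K"
    and bB: "\<forall>t\<in>{0..T}. (\<integral>\<^sup>+ s. ennreal ((B t s)\<^sup>2) \<partial>RT T) \<le> ennreal K"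
    and bB': "\<forall>t\<in>{0..T}. (\<integral>\<^sup>+ s. ennreal ((B s t)\<^sup>2) \<partial>RT T) \<le> ennreal K"
    and ga: "good T M a" and gz: "good T M z" and gb: "good T M b"
  shows "integrable M (QQ T A B lam a z b)"
proof -
  have mB': "case_prod (kadj B) \<in> borel_measurable borel"
  proof -
    have f: "fst \<in> borel_measurable (borel :: (real \<times> real) measure)"
      using measurable_fst[of "borel::real measure" "borel::real measure"] by (simp only: borel_prod)
    have s: "snd \<in> borel_measurable (borel :: (real \<times> real) measure)"
      using measurable_snd[of "borel::real measure" "borel::real measure"] by (simp only: borel_prod)
    show ?thesis using kernel_meas[OF mB s f] by (simp add: kadj_def case_prod_beta')
  qed
  have bB'': "\<forall>t\<in>{0..T}. (\<integral>\<^sup>+ s. ennreal ((kadj B t s)\<^sup>2) \<partial>RT T) \<le> ennreal K"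
    using bB' by (simp add: kadj_def)
  have g1: "good T M (\<lambda>\<omega> t. kop T A (a \<omega>) t + lam * a \<omega> t)"
    by (intro good_add good_scale kop_good[OF sfM mA bA ga T0] ga)
  have g2: "good T M (\<lambda>\<omega> t. kop T B (z \<omega>) t + kop T (kadj B) (z \<omega>) t)"
    by (intro good_add kop_good[OF sfM mB bB gz T0] kop_good[OF sfM mB' bB'' gz T0])
  note i1 = ip_integrable[OF sfM ga g1] and i2 = ip_integrable[OF sfM ga g2] and i3 = ip_integrable[OF sfM gb ga]
  show ?thesis unfolding QQ_def
    using Bochner_Integration.integrable_add[OF Bochner_Integration.integrable_diff[OF
        Bochner_Integration.integrable_minus[OF i1] i2] i3] by simp
qed

lemma cmp:
  fixes f1 f2 g c1 c2 :: "'a \<Rightarrow> real"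
  assumes i: "integrable M f1" "integrable M f2" "integrable M c1" "integrable M c2"
  shows "((\<integral>\<omega>. f1 \<omega> + g \<omega> + c1 \<omega> \<partial>M) \<le> (\<integral>\<omega>. f2 \<omega> + g \<omega> + c1 \<omega> \<partial>M)) \<longleftrightarrow>
         ((\<integral>\<omega>. f1 \<omega> + g \<omega> + c2 \<omega> \<partial>M) \<le> (\<integral>\<omega>. f2 \<omega> + g \<omega> + c2 \<omega> \<partial>M))"
proof (cases "integrable M g")
  case True
  then show ?thesis using i by simp
next
  case False
  have ni: "\<not> integrable M (\<lambda>\<omega>. f \<omega> + g \<omega> + c \<omega>)" if "integrable M f" "integrable M c" for f c
  proof
    assume "integrable M (\<lambda>\<omega>. f \<omega> + g \<omega> + c \<omega>)"
    hence "integrable M (\<lambda>\<omega>. (f \<omega> + g \<omega> + c \<omega>) - f \<omega> - c \<omega>)"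
      using that by (intro Bochner_Integration.integrable_diff) auto
    thus False using False by simp
  qed
  show ?thesis using ni[OF i(1) i(3)] ni[OF i(2) i(3)] ni[OF i(1) i(4)] ni[OF i(2) i(4)]
    by (simp add: not_integrable_integral_eq)
qed



lemma stepP_lower: "i \<in> {1..N} \<Longrightarrow> v \<in> stepP N i \<Longrightarrow> (real i - 1) / real N \<le> v"
  by (auto simp: stepP_def split: if_splits)

lemma stepP_upper: "i < N \<Longrightarrow> v \<in> stepP N i \<Longrightarrow> v < real i / real N"
  by (auto simp: stepP_def)

lemma stepP_sub: assumes "i \<in> {1..N}" shows "stepP N i \<subseteq> {0..1}"
proof
  fix v assume v: "v \<in> stepP N i"
  have N: "real N \<ge> 1" using assms by auto
  show "v \<in> {0..1}"
  proof (cases "i < N")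
    case True
    then have "(real i - 1) / real N \<le> v" "v < real i / real N" using v by (auto simp: stepP_def)
    moreover have "0 \<le> (real i - 1) / real N" using assms N by auto
    moreover have "real i / real N \<le> 1" using True N by (simp add: divide_le_eq_1)
    ultimately show ?thesis by auto
  next
    case False
    then have "(real N - 1) / real N \<le> v" "v \<le> 1" using v by (auto simp: stepP_def)
    moreover have "0 \<le> (real N - 1) / real N" using N by auto
    ultimately show ?thesis by auto
  qed
qed

lemma stepP_disj:
  assumes "i \<in> {1..N}" "j \<in> {1..N}" "i \<noteq> j" "v \<in> stepP N i" "v \<in> stepP N j"
  shows False
proof -
  have N: "real N > 0" using assms by auto
  have aux: False if "a \<in> {1..N}" "b \<in> {1..N}" "a < b" "v \<in> stepP N a" "v \<in> stepP N b" for a b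
  proof -
    have "a < N" using that by auto
    hence "v < real a / real N" using stepP_upper that by blast
    moreover have "(real b - 1) / real N \<le> v" using stepP_lower that by blast
    moreover have "real a / real N \<le> (real b - 1) / real N"
      using that N by (intro divide_right_mono) auto
    ultimately show False by auto
  qed
  show False using assms aux[of i j] aux[of j i] by (cases "i < j") auto
qed

lemma stepP_ex:
  assumes N: "N \<ge> 1" and v: "v \<in> {0..1}"
  shows "\<exists>i\<in>{1..N}. v \<in> stepP N i"
proof -
  define k where "k = nat \<lfloor>v * real N\<rfloor>"
  have Np: "real N > 0" using N by auto
  have vN: "0 \<le> v * real N" using v by auto
  have k1: "real k \<le> v * real N" "v * real N < real k + 1"
    unfolding k_def using vN by linarith+
  show ?thesis
  proof (cases "k + 1 \<ge> N")
    case True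
    have "(real N - 1) \<le> v * real N" using True k1 by linarith
    hence "(real N - 1) / real N \<le> v" using Np by (simp add: divide_le_eq)
    hence "v \<in> stepP N N" using v by (auto simp: stepP_def)
    then show ?thesis using N by auto
  next
    case False
    then have i: "k + 1 < N" by simp
    have "(real (k+1) - 1) / real N \<le> v" using k1 Np by (simp add: divide_le_eq)
    moreover have "v < real (k+1) / real N" using k1 Np by (simp add: less_divide_eq)
    ultimately have "v \<in> stepP N (k+1)" using i by (auto simp: stepP_def)
    then show ?thesis using i by (intro bexI[of _ "k+1"]) auto
  qed
qed

lemma stepidx_eq: assumes "i \<in> {1..N}" "v \<in> stepP N i" shows "stepidx N v = i"
  unfolding stepidx_def
  using assms stepP_disj by (intro the_equality) blast+

lemma stepidx_in: assumes "N \<ge> 1" "v \<in> {0..1}"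
  shows "stepidx N v \<in> {1..N}" "v \<in> stepP N (stepidx N v)"
  using stepP_ex[OF assms] stepidx_eq by metis+

lemma stepP_borel[measurable]: "stepP N i \<in> sets borel"
  by (simp add: stepP_def)

lemma stepP_measure: assumes "i \<in> {1..N}" shows "emeasure lborel (stepP N i) = ennreal (1 / real N)"
proof (cases "i < N")
  case True
  have "(real i - 1) / real N \<le> real i / real N" using assms by (intro divide_right_mono) auto
  then show ?thesis using True assms by (simp add: stepP_def diff_divide_distrib)
next
  case False
  have "(real N - 1) / real N \<le> 1" using assms by (simp add: divide_le_eq_1)
  then show ?thesis using False assms by (simp add: stepP_def diff_divide_distrib)
qed

lemma sum_indicator_step:
  assumes N: "N \<ge> 1"
  shows "(\<Sum>j\<in>{1..N}. indicator (stepP N j) v * (c j::real)) = indicator {0..1} v * c (stepidx N v)"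
proof (cases "v \<in> {0..1}")
  case True
  note si = stepidx_in[OF N True]
  have "(\<Sum>j\<in>{1..N}. indicator (stepP N j) v * c j) = (\<Sum>j\<in>{1..N}. if j = stepidx N v then c j else 0)"
    using si stepP_disj by (intro sum.cong) (auto simp: indicator_def)
  also have "\<dots> = c (stepidx N v)" using si by simp
  finally show ?thesis using True by simp
next
  case False
  then have "\<forall>j\<in>{1..N}. v \<notin> stepP N j" using stepP_sub by blast
  then show ?thesis using False by (simp add: indicator_def)
qed

lemma Wagg_step:
  assumes N: "N \<ge> 1" and u: "u \<in> {0..1}" and a': "\<And>v. v \<noteq> u \<Longrightarrow> \<alpha>' v = \<alpha> (stepidx N v)"
  shows "Wagg (step_graphon N w) \<alpha>' u \<omega> t = (1 / real N) * (\<Sum>j\<in>{1..N}. w (stepidx N u) j * \<alpha> j \<omega> t)"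
proof -
  define i where "i = stepidx N u"
  define c where "c j = w i j * \<alpha> j \<omega> t" for j
  define g where "g v = (\<Sum>j\<in>{1..N}. indicator (stepP N j) v * c j)" for v
  define c0 where "c0 = indicator {0..1} u * (w i (stepidx N u) * \<alpha>' u \<omega> t)"
  have gm[measurable]: "g \<in> borel_measurable lborel" unfolding g_def by measurable
  have eqf: "(\<lambda>v. indicator {0..1} v *\<^sub>R (w i (stepidx N v) * \<alpha>' v \<omega> t)) = (\<lambda>v. if v = u then c0 else g v)"
  proof
    fix v show "indicator {0..1} v *\<^sub>R (w i (stepidx N v) * \<alpha>' v \<omega> t) = (if v = u then c0 else g v)"
      using sum_indicator_step[OF N, of v c] a'[of v] by (auto simp: g_def c_def c0_def)
  qed
  have "Wagg (step_graphon N w) \<alpha>' u \<omega> t = (\<integral>v. (if v = u then c0 else g v) \<partial>lborel)"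
    unfolding Wagg_def set_lebesgue_integral_def step_graphon_def i_def[symmetric] eqf ..
  also have "\<dots> = (\<integral>v. g v \<partial>lborel)"
  proof (rule integral_cong_AE)
    show "AE v in lborel. (if v = u then c0 else g v) = g v"
      using AE_lborel_singleton[of u] by eventually_elim simp
  qed simp_all
  also have "\<dots> = (\<Sum>j\<in>{1..N}. (\<integral>v. indicator (stepP N j) v * c j \<partial>lborel))"
    unfolding g_def
  proof (rule Bochner_Integration.integral_sum)
    fix j assume j: "j \<in> {1..N}"
    show "integrable lborel (\<lambda>v. indicator (stepP N j) v * c j)"
      using stepP_measure[OF j] by (intro Bochner_Integration.integrable_mult_left integrable_real_indicator) auto
  qed
  also have "\<dots> = (\<Sum>j\<in>{1..N}. c j / real N)"
  proof (rule sum.cong)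
    fix j assume j: "j \<in> {1..N}"
    have "measure lborel (stepP N j) = 1 / real N"
      using stepP_measure[OF j] by (simp add: measure_def)
    then show "(\<integral>v. indicator (stepP N j) v * c j \<partial>lborel) = c j / real N" by simp
  qed simp
  finally show ?thesis by (simp add: c_def i_def sum_divide_distrib)
qed

lemma step_admG:
  assumes N: "N \<ge> 1" and sub: "sets (F T) \<subseteq> sets M" "space (F T) = space M"
    and sfM: "sigma_finite_measure M" and T0: "T \<ge> 0"
    and adm: "\<forall>j\<in>{1..N}. admissible T M F (\<alpha> j)"
  shows "admissibleG T M F (step N \<alpha>)"
proof -
  have mj: "(\<lambda>p. \<alpha> j (fst p) (snd p)) \<in> borel_measurable (M \<Otimes>\<^sub>M restrict_space lborel {0..T})"
    if "j \<in> {1..N}" for j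
  proof -
    have "good T M (\<alpha> j)"
      using adm that by (intro adm_good[where F=F and T=T and M=M, OF sub sfM _ _ T0]) (auto simp: admissible_def)
    thus ?thesis by (simp add: good_def RT_def)
  qed
  let ?S = "restrict_space (lebesgue :: real measure) {0..1} \<Otimes>\<^sub>M (M \<Otimes>\<^sub>M restrict_space lborel {0..T})"
  have ind: "(\<lambda>u. indicator (stepP N j) u :: real) \<in> borel_measurable (restrict_space (lebesgue :: real measure) {0..1})" for j
  proof -
    have "stepP N j \<in> sets lebesgue" using stepP_borel[of N j] by auto
    hence "(\<lambda>u. indicator (stepP N j) u :: real) \<in> borel_measurable lebesgue"
      by (rule borel_measurable_indicator)
    thus ?thesis by (rule measurable_restrict_space1)
  qed
  have m1: "(\<lambda>x. \<Sum>j\<in>{1..N}. indicator (stepP N j) (fst x) * \<alpha> j (fst (snd x)) (snd (snd x)))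
      \<in> borel_measurable ?S"
  proof (rule borel_measurable_sum)
    fix j assume j: "j \<in> {1..N}"
    have a: "(\<lambda>x. indicator (stepP N j) (fst x) :: real) \<in> borel_measurable ?S"
      by (rule measurable_compose[OF measurable_fst ind])
    have b: "(\<lambda>x. \<alpha> j (fst (snd x)) (snd (snd x))) \<in> borel_measurable ?S"
      using measurable_compose[OF measurable_snd mj[OF j]] by blast
    show "(\<lambda>x. indicator (stepP N j) (fst x) * \<alpha> j (fst (snd x)) (snd (snd x))) \<in> borel_measurable ?S"
      using borel_measurable_times[OF a b] by simp
  qed
  have meas: "(\<lambda>(u, \<omega>, t). step N \<alpha> u \<omega> t) \<in> borel_measurable ?S"
  proof (subst measurable_cong)
    fix x :: "real \<times> _ \<times> real" assume x: "x \<in> space ?S"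
    then have "fst x \<in> {0..1}" by (auto simp: space_pair_measure)
    then show "(\<lambda>(u, \<omega>, t). step N \<alpha> u \<omega> t) x
        = (\<Sum>j\<in>{1..N}. indicator (stepP N j) (fst x) * \<alpha> j (fst (snd x)) (snd (snd x)))"
      using sum_indicator_step[OF N, of "fst x" "\<lambda>j. \<alpha> j (fst (snd x)) (snd (snd x))"]
      by (auto simp: step_def split: prod.splits)
  qed (rule m1)
  have prog: "\<forall>u\<in>{0..1}. progressive T F (step N \<alpha> u)"
    using adm stepidx_in[OF N] by (auto simp: step_def admissible_def)
  have l2: "\<forall>u\<in>{0..1}. L2proc T M (step N \<alpha> u)"
    using adm stepidx_in[OF N] by (auto simp: step_def admissible_def)
  define L where "L j = (\<integral>\<^sup>+ t\<in>{0..T}. (\<integral>\<^sup>+ \<omega>. ennreal ((\<alpha> j \<omega> t)\<^sup>2) \<partial>M) \<partial>lborel)" for j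
  have Lfin: "(\<Sum>j\<in>{1..N}. L j) < \<infinity>"
    using adm by (simp add: L_def admissible_def L2proc_def less_top)
  have "(\<integral>\<^sup>+ u\<in>{0..1}. (\<integral>\<^sup>+ t\<in>{0..T}. (\<integral>\<^sup>+ \<omega>. ennreal ((step N \<alpha> u \<omega> t)\<^sup>2) \<partial>M) \<partial>lborel) \<partial>lborel)
      \<le> (\<integral>\<^sup>+ (u::real)\<in>{0..1}. (\<Sum>j\<in>{1..N}. L j) \<partial>lborel)"
  proof (rule nn_integral_mono)
    fix u
    show "(\<integral>\<^sup>+ t\<in>{0..T}. (\<integral>\<^sup>+ \<omega>. ennreal ((step N \<alpha> u \<omega> t)\<^sup>2) \<partial>M) \<partial>lborel) * indicator {0..1} u
        \<le> (\<Sum>j\<in>{1..N}. L j) * indicator {0..1} u"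
    proof (cases "u \<in> {0..1}")
      case True
      have "L (stepidx N u) \<le> (\<Sum>j\<in>{1..N}. L j)"
        using stepidx_in[OF N True] by (intro member_le_sum) auto
      then show ?thesis using True by (simp add: step_def L_def)
    qed simp
  qed
  also have "\<dots> = (\<Sum>j\<in>{1..N}. L j) * emeasure lborel {0..(1::real)}"
    by (rule nn_integral_cmult_indicator) simp
  also have "\<dots> = (\<Sum>j\<in>{1..N}. L j)" by simp
  also have "\<dots> < \<infinity>" by (fact Lfin)
  finally show ?thesis unfolding admissibleG_def using meas prog l2 by auto
qed

lemma key:
  fixes A B C :: "real \<Rightarrow> real \<Rightarrow> real"
  assumes sfM: "sigma_finite_measure M" and T0: "T \<ge> 0"
    and mA: "case_prod A \<in> borel_measurable borel" and mB: "case_prod B \<in> borel_measurable borel"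
    and bA: "\<forall>t\<in>{0..T}. (\<integral>\<^sup>+ s. ennreal ((A t s)\<^sup>2) \<partial>RT T) \<le> ennreal K"
    and bB: "\<forall>t\<in>{0..T}. (\<integral>\<^sup>+ s. ennreal ((B t s)\<^sup>2) \<partial>RT T) \<le> ennreal K"
    and bB': "\<forall>t\<in>{0..T}. (\<integral>\<^sup>+ s. ennreal ((B s t)\<^sup>2) \<partial>RT T) \<le> ennreal K"
    and N: "N \<ge> 1" and i: "i \<in> {1..N}" and u: "u \<in> {0..1}" and ui: "stepidx N u = i"
    and wii: "w i i = 0"
    and g\<alpha>: "\<forall>j\<in>{1..N}. good T M (\<alpha> j)" and g\<beta>: "good T M \<beta>" and gb: "good T M (b i)"
    and ci: "integrable M (c i)" and cgu: "integrable M (cg u)"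
  shows "(JW T M A B C lam (step_graphon N w) (step N b) bs cg u ((step N \<alpha>)(u := \<beta>))
            \<le> JW T M A B C lam (step_graphon N w) (step N b) bs cg u (step N \<alpha>))
     \<longleftrightarrow> (J0 T M A B C lam N w b bs c i (\<alpha>(i := \<beta>)) \<le> J0 T M A B C lam N w b bs c i \<alpha>)"
proof -
  define Z where "Z = abar N w \<alpha> i"
  have W1: "Wagg (step_graphon N w) ((step N \<alpha>)(u := \<beta>)) u = Z"
    unfolding Z_def abar_def
    by (intro ext, subst Wagg_step[OF N u, where \<alpha>=\<alpha>]) (auto simp: step_def ui)
  have W2: "Wagg (step_graphon N w) (step N \<alpha>) u = Z"
    unfolding Z_def abar_def
    by (intro ext, subst Wagg_step[OF N u, where \<alpha>=\<alpha>]) (auto simp: step_def ui)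
  have Z2: "abar N w (\<alpha>(i := \<beta>)) i = Z"
    unfolding Z_def abar_def
    by (intro ext, rule arg_cong[where f="\<lambda>x. _ * x"], rule sum.cong) (auto simp: wii)
  have gZ: "good T M Z"
    unfolding Z_def abar_def
    by (intro good_scale good_sum) (auto intro: good_scale g\<alpha>[rule_format])
  have gai: "good T M (\<alpha> i)" using g\<alpha> i by auto
  have Qb: "integrable M (QQ T A B lam \<beta> Z (b i))"
    by (rule QQ_integrable[OF sfM T0 mA mB bA bB bB' g\<beta> gZ gb])
  have Qa: "integrable M (QQ T A B lam (\<alpha> i) Z (b i))"
    by (rule QQ_integrable[OF sfM T0 mA mB bA bB bB' gai gZ gb])
  have sb: "step N b u = b i" "step N \<alpha> u = \<alpha> i" by (simp_all add: step_def ui)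
  show ?thesis
    unfolding JW_def J0_def W1 W2 Z2 sb fun_upd_same
    unfolding Z_def[symmetric] payoff_split[where a=\<beta> and z=Z and b="b i"]
      payoff_split[where a="\<alpha> i" and z=Z and b="b i"] fun_upd_same
    using cmp[OF Qb Qa cgu ci, of "RR T C Z bs"] by (simp add: sb)
qed

lemma AE_exists:
  assumes "AE u in lborel. P u" "S \<in> sets borel" "emeasure lborel S > 0"
  shows "\<exists>u\<in>S. P u"
proof (rule ccontr)
  assume "\<not> (\<exists>u\<in>S. P u)"
  hence "AE u in lborel. u \<notin> S" using assms(1) by (auto elim: AE_mp)
  hence "emeasure lborel S = 0"
    using AE_iff_measurable[of S lborel "\<lambda>u. u \<notin> S"] assms(2) by auto
  thus False using assms(3) by simp
qed

theorem mainTheorem6: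
  fixes T lam :: real and M :: "'w measure" and F :: "real \<Rightarrow> 'w measure"
    and A B C :: "real \<Rightarrow> real \<Rightarrow> real"
    and N :: nat and w :: "nat \<Rightarrow> nat \<Rightarrow> real"
    and b :: "nat \<Rightarrow> 'w \<Rightarrow> real \<Rightarrow> real" and bs :: "'w \<Rightarrow> real \<Rightarrow> real"
    and c :: "nat \<Rightarrow> 'w \<Rightarrow> real" and cg :: "real \<Rightarrow> 'w \<Rightarrow> real"
    and \<alpha> :: "nat \<Rightarrow> 'w \<Rightarrow> real \<Rightarrow> real"
  assumes T_pos: "T > 0"
    and prob: "prob_space M"
    and filt: "filtration (space M) F"
    and filt_sub: "\<And>t. sets (F t) \<subseteq> sets M"
    and N_pos: "N \<ge> 1"
    and A_volt: "volterra T A" and B_volt: "volterra T B" and C_volt: "volterra T C"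
    and lam_pos: "lam > 0"
    and b_adm: "\<forall>i\<in>{1..N}. progressive T F (b i) \<and> L2proc T M (b i)"
    and bs_adm: "progressive T F bs \<and> L2proc T M bs"
    and c_int: "\<forall>i\<in>{1..N}. integrable M (c i) \<and> c i \<in> borel_measurable (F T)"
    and w_range: "\<forall>i\<in>{1..N}. \<forall>j\<in>{1..N}. 0 \<le> w i j \<and> w i j \<le> 1"
    and w_sym: "\<forall>i\<in>{1..N}. \<forall>j\<in>{1..N}. w i j = w j i"
    and w_diag: "\<forall>i\<in>{1..N}. w i i = 0"
    and W_kernel_bound:
      "\<exists>K::real. (\<forall>t\<in>{0..T}. (\<integral>\<^sup>+ s \<in> {0..T}. ennreal ((A t s)\<^sup>2 + (B t s)\<^sup>2) \<partial>lborel) \<le> ennreal K)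
               \<and> (\<forall>s\<in>{0..T}. (\<integral>\<^sup>+ t \<in> {0..T}. ennreal ((A t s)\<^sup>2 + (B t s)\<^sup>2) \<partial>lborel) \<le> ennreal K)"
    and cg_int: "\<forall>u\<in>{0..1}. integrable M (cg u)"
    and A_nonneg: "nonneg_def_kernel T A"
  shows "nash_N T M F A B C lam N w b bs c \<alpha> \<longleftrightarrow>
         nash_graphon T M F A B C lam (step_graphon N w) (step N b) bs cg (step N \<alpha>)"
proof -
  have sfM: "sigma_finite_measure M" using prob by (rule prob_space_imp_sigma_finite)
  have T0: "T \<ge> 0" using T_pos by simp
  have sub: "sets (F T) \<subseteq> sets M" "space (F T) = space M"
    using filt_sub filtration.space_F[OF filt] by auto
  have mA: "case_prod A \<in> borel_measurable borel" using A_volt by (simp add: volterra_def)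
  have mB: "case_prod B \<in> borel_measurable borel" using B_volt by (simp add: volterra_def)
  obtain K where K1: "\<forall>t\<in>{0..T}. (\<integral>\<^sup>+ s \<in> {0..T}. ennreal ((A t s)\<^sup>2 + (B t s)\<^sup>2) \<partial>lborel) \<le> ennreal K"
    and K2: "\<forall>s\<in>{0..T}. (\<integral>\<^sup>+ t \<in> {0..T}. ennreal ((A t s)\<^sup>2 + (B t s)\<^sup>2) \<partial>lborel) \<le> ennreal K"
    using W_kernel_bound by blast
  have bA: "\<forall>t\<in>{0..T}. (\<integral>\<^sup>+ s. ennreal ((A t s)\<^sup>2) \<partial>RT T) \<le> ennreal K"
  proof
    fix t assume t: "t \<in> {0..T}"
    have "(\<integral>\<^sup>+ s. ennreal ((A t s)\<^sup>2) \<partial>RT T) \<le> (\<integral>\<^sup>+ s. ennreal ((A t s)\<^sup>2 + (B t s)\<^sup>2) \<partial>RT T)"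
      by (intro nn_integral_mono ennreal_leI) simp
    also have "\<dots> \<le> ennreal K" using K1 t by (simp add: nn_integral_RT)
    finally show "(\<integral>\<^sup>+ s. ennreal ((A t s)\<^sup>2) \<partial>RT T) \<le> ennreal K" .
  qed
  have bB: "\<forall>t\<in>{0..T}. (\<integral>\<^sup>+ s. ennreal ((B t s)\<^sup>2) \<partial>RT T) \<le> ennreal K"
  proof
    fix t assume t: "t \<in> {0..T}"
    have "(\<integral>\<^sup>+ s. ennreal ((B t s)\<^sup>2) \<partial>RT T) \<le> (\<integral>\<^sup>+ s. ennreal ((A t s)\<^sup>2 + (B t s)\<^sup>2) \<partial>RT T)"
      by (intro nn_integral_mono ennreal_leI) simp
    also have "\<dots> \<le> ennreal K" using K1 t by (simp add: nn_integral_RT)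
    finally show "(\<integral>\<^sup>+ s. ennreal ((B t s)\<^sup>2) \<partial>RT T) \<le> ennreal K" .
  qed
  have bB': "\<forall>t\<in>{0..T}. (\<integral>\<^sup>+ s. ennreal ((B s t)\<^sup>2) \<partial>RT T) \<le> ennreal K"
  proof
    fix t assume t: "t \<in> {0..T}"
    have "(\<integral>\<^sup>+ s. ennreal ((B s t)\<^sup>2) \<partial>RT T) \<le> (\<integral>\<^sup>+ s. ennreal ((A s t)\<^sup>2 + (B s t)\<^sup>2) \<partial>RT T)"
      by (intro nn_integral_mono ennreal_leI) simp
    also have "\<dots> \<le> ennreal K" using K2 t by (simp add: nn_integral_RT)
    finally show "(\<integral>\<^sup>+ s. ennreal ((B s t)\<^sup>2) \<partial>RT T) \<le> ennreal K" .
  qed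
  have adm_good': "good T M X" if "admissible T M F X" for X
    using that by (intro adm_good[where F=F and T=T and M=M, OF sub sfM _ _ T0]) (auto simp: admissible_def)
  have gb: "good T M (b i)" if "i \<in> {1..N}" for i
    using b_adm that by (intro adm_good[where F=F and T=T and M=M, OF sub sfM _ _ T0]) auto
  note key' = key[OF sfM T0 mA mB bA bB bB' N_pos]
  show ?thesis
  proof
    assume nN: "nash_N T M F A B C lam N w b bs c \<alpha>"
    have adm: "\<forall>j\<in>{1..N}. admissible T M F (\<alpha> j)" using nN by (simp add: nash_N_def)
    have aG: "admissibleG T M F (step N \<alpha>)" by (rule step_admG[OF N_pos sub sfM T0 adm])
    have "\<forall>u\<in>{0..1}. \<forall>\<beta>. admissible T M F \<beta> \<longrightarrow>
        JW T M A B C lam (step_graphon N w) (step N b) bs cg u ((step N \<alpha>)(u := \<beta>))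
          \<le> JW T M A B C lam (step_graphon N w) (step N b) bs cg u (step N \<alpha>)"
    proof (intro ballI allI impI)
      fix u :: real and \<beta> assume u: "u \<in> {0..1}" and \<beta>: "admissible T M F \<beta>"
      define i where "i = stepidx N u"
      have i: "i \<in> {1..N}" using stepidx_in[OF N_pos u] by (simp add: i_def)
      have "J0 T M A B C lam N w b bs c i (\<alpha>(i := \<beta>)) \<le> J0 T M A B C lam N w b bs c i \<alpha>"
        using nN i \<beta> by (simp add: nash_N_def)
      then show "JW T M A B C lam (step_graphon N w) (step N b) bs cg u ((step N \<alpha>)(u := \<beta>))
          \<le> JW T M A B C lam (step_graphon N w) (step N b) bs cg u (step N \<alpha>)"
      proof -
        have wii: "w i i = 0" using w_diag i by blast
        have ga: "\<forall>j\<in>{1..N}. good T M (\<alpha> j)" using adm adm_good' by blast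
        have gbeta: "good T M \<beta>" using adm_good' \<beta> by blast
        have ci: "integrable M (c i)" using c_int i by blast
        have cgu: "integrable M (cg u)" using cg_int u by blast
        note k = key'[where i=i and u=u and w=w and \<alpha>=\<alpha> and \<beta>=\<beta> and b=b and c=c and cg=cg and lam=lam and bs=bs and C=C, OF i u i_def[symmetric] wii ga gbeta gb[OF i] ci cgu]
        show ?thesis using k \<open>J0 T M A B C lam N w b bs c i (\<alpha>(i := \<beta>)) \<le> J0 T M A B C lam N w b bs c i \<alpha>\<close>
          by blast
      qed
    qed
    then show "nash_graphon T M F A B C lam (step_graphon N w) (step N b) bs cg (step N \<alpha>)"
      unfolding nash_graphon_def using aG by (auto intro: AE_I2)
  next
    assume nG: "nash_graphon T M F A B C lam (step_graphon N w) (step N b) bs cg (step N \<alpha>)"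
    have aG: "admissibleG T M F (step N \<alpha>)" using nG by (simp add: nash_graphon_def)
    have AEc: "AE u in lborel. u \<in> {0..1} \<longrightarrow> L2proc T M (step N \<alpha> u) \<and>
        (\<forall>\<beta>. admissible T M F \<beta> \<longrightarrow>
           JW T M A B C lam (step_graphon N w) (step N b) bs cg u ((step N \<alpha>)(u := \<beta>))
            \<le> JW T M A B C lam (step_graphon N w) (step N b) bs cg u (step N \<alpha>))"
    proof -
      have AE1: "AE u in lborel. u \<in> {0..1} \<longrightarrow> (\<forall>\<beta>. admissible T M F \<beta> \<longrightarrow>
           JW T M A B C lam (step_graphon N w) (step N b) bs cg u ((step N \<alpha>)(u := \<beta>))
            \<le> JW T M A B C lam (step_graphon N w) (step N b) bs cg u (step N \<alpha>))"
        using nG unfolding nash_graphon_def by blast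
      have AE2: "AE u in lborel. u \<in> {0..1} \<longrightarrow> L2proc T M (step N \<alpha> u)"
        using aG unfolding admissibleG_def by blast
      from AE1 AE2 show ?thesis by eventually_elim blast
    qed
    have pick: "\<exists>u\<in>stepP N i. L2proc T M (step N \<alpha> u) \<and>
        (\<forall>\<beta>. admissible T M F \<beta> \<longrightarrow>
           JW T M A B C lam (step_graphon N w) (step N b) bs cg u ((step N \<alpha>)(u := \<beta>))
            \<le> JW T M A B C lam (step_graphon N w) (step N b) bs cg u (step N \<alpha>))"
      if i: "i \<in> {1..N}" for i
    proof -
      have "AE u in lborel. u \<in> stepP N i \<longrightarrow> L2proc T M (step N \<alpha> u) \<and>
        (\<forall>\<beta>. admissible T M F \<beta> \<longrightarrow>
           JW T M A B C lam (step_graphon N w) (step N b) bs cg u ((step N \<alpha>)(u := \<beta>))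
            \<le> JW T M A B C lam (step_graphon N w) (step N b) bs cg u (step N \<alpha>))"
      proof (rule AE_mp[OF AEc AE_I2])
        fix u show "(u \<in> {0..1} \<longrightarrow> L2proc T M (step N \<alpha> u) \<and>
          (\<forall>\<beta>. admissible T M F \<beta> \<longrightarrow>
           JW T M A B C lam (step_graphon N w) (step N b) bs cg u ((step N \<alpha>)(u := \<beta>))
            \<le> JW T M A B C lam (step_graphon N w) (step N b) bs cg u (step N \<alpha>))) \<longrightarrow>
          (u \<in> stepP N i \<longrightarrow> L2proc T M (step N \<alpha> u) \<and>
          (\<forall>\<beta>. admissible T M F \<beta> \<longrightarrow>
           JW T M A B C lam (step_graphon N w) (step N b) bs cg u ((step N \<alpha>)(u := \<beta>))
            \<le> JW T M A B C lam (step_graphon N w) (step N b) bs cg u (step N \<alpha>)))"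
          using stepP_sub[OF i] by blast
      qed
      moreover have "emeasure lborel (stepP N i) > 0" using stepP_measure[OF i] N_pos by simp
      ultimately have "\<exists>u\<in>stepP N i. u \<in> stepP N i \<longrightarrow> L2proc T M (step N \<alpha> u) \<and>
        (\<forall>\<beta>. admissible T M F \<beta> \<longrightarrow>
           JW T M A B C lam (step_graphon N w) (step N b) bs cg u ((step N \<alpha>)(u := \<beta>))
            \<le> JW T M A B C lam (step_graphon N w) (step N b) bs cg u (step N \<alpha>))"
        by (intro AE_exists stepP_borel)
      then obtain u where "u \<in> stepP N i" "u \<in> stepP N i \<longrightarrow> L2proc T M (step N \<alpha> u) \<and>
        (\<forall>\<beta>. admissible T M F \<beta> \<longrightarrow>
           JW T M A B C lam (step_graphon N w) (step N b) bs cg u ((step N \<alpha>)(u := \<beta>))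
            \<le> JW T M A B C lam (step_graphon N w) (step N b) bs cg u (step N \<alpha>))"
        by blast
      then show ?thesis by blast
    qed
    have adm: "\<forall>j\<in>{1..N}. admissible T M F (\<alpha> j)"
    proof
      fix j assume j: "j \<in> {1..N}"
      obtain u where u: "u \<in> stepP N j" "L2proc T M (step N \<alpha> u)" using pick[OF j] by blast
      have u01: "u \<in> {0..1}" using stepP_sub[OF j] u by auto
      have "step N \<alpha> u = \<alpha> j" using stepidx_eq[OF j u(1)] by (simp add: step_def)
      moreover have "progressive T F (step N \<alpha> u)" using aG u01 unfolding admissibleG_def by blast
      ultimately show "admissible T M F (\<alpha> j)"
        using u by (simp add: admissible_def)
    qed
    have "\<forall>i\<in>{1..N}. \<forall>\<beta>. admissible T M F \<beta> \<longrightarrow>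
        J0 T M A B C lam N w b bs c i (\<alpha>(i := \<beta>)) \<le> J0 T M A B C lam N w b bs c i \<alpha>"
    proof (intro ballI allI impI)
      fix i \<beta> assume i: "i \<in> {1..N}" and \<beta>: "admissible T M F \<beta>"
      obtain u where u: "u \<in> stepP N i" and P: "\<forall>\<beta>. admissible T M F \<beta> \<longrightarrow>
           JW T M A B C lam (step_graphon N w) (step N b) bs cg u ((step N \<alpha>)(u := \<beta>))
            \<le> JW T M A B C lam (step_graphon N w) (step N b) bs cg u (step N \<alpha>)"
        using pick[OF i] by blast
      have u01: "u \<in> {0..1}" using stepP_sub[OF i] u by auto
      have ui: "stepidx N u = i" using stepidx_eq[OF i u] .
      show "J0 T M A B C lam N w b bs c i (\<alpha>(i := \<beta>)) \<le> J0 T M A B C lam N w b bs c i \<alpha>"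
      proof -
        have wii: "w i i = 0" using w_diag i by blast
        have ga: "\<forall>j\<in>{1..N}. good T M (\<alpha> j)" using adm adm_good' by blast
        have gbeta: "good T M \<beta>" using adm_good' \<beta> by blast
        have ci: "integrable M (c i)" using c_int i by blast
        have cgu: "integrable M (cg u)" using cg_int u01 by blast
        note k = key'[where i=i and u=u and w=w and \<alpha>=\<alpha> and \<beta>=\<beta> and b=b and c=c and cg=cg and lam=lam and bs=bs and C=C, OF i u01 ui wii ga gbeta gb[OF i] ci cgu]
        show ?thesis using k P \<beta> by blast
      qed
    qed
    then show "nash_N T M F A B C lam N w b bs c \<alpha>"
      unfolding nash_N_def using adm by auto
  qed
qed


end
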